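(* Let $1\le k\le r$ and let $\mathscr{I}=[I_0,\dots,I_{k-1}]$ be an ideal of $\Omega_{H_{k-1}}$. Then (1) $[I_0,\dots,I_{k-1},L(I_{k-1})]$, where $L(I_{k-1})=(\mathrm{res}^k_{k-1})^{-1}(I_{k-1})$, is an ideal of $\Omega_{H_k}$, and it is the largest ideal $[I_0,\dots,I_{k-1},J]$ of $\Omega_{H_k}$ whose restriction to $H_{k-1}$ is $\mathscr I$; (2) $[I_0,\dots,I_{k-1},S(I_{k-1})]$, where $S(I_{k-1})$ is the ideal of $R_k$ generated by $\mathrm{ind}^k_{k-1}(I_{k-1})\cup\mathrm{jnd}^k_{k-1}(I_{k-1})$, is an ideal of $\Omega_{H_k}$, and it is the smallest ideal of $\Omega_{H_k}$ whose restriction to $H_{k-1}$ is $\mathscr I$.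
   Context: Fix a prime $p$ and an integer $r\ge0$. For $0\le k\le r$ let $R_k$ be the commutative ring which is free as a $\mathbb{Z}$-module with basis $X_{k,0},\dots,X_{k,k}$ and multiplication $X_{k,i}X_{k,j}=p^{k-\max(i,j)}X_{k,\min(i,j)}$; thus $X_{k,k}=1$, and an integer $n$ is identified with $nX_{k,k}$. For $0\le k\le\ell\le r$ define: the additive map $\mathrm{ind}^\ell_k:R_k\to R_\ell$, $X_{k,i}\mapsto X_{\ell,i}$; the ring homomorphism $\mathrm{res}^\ell_k:R_\ell\to R_k$, $\mathrm{res}^\ell_k(X_{\ell,i})=p^{\ell-k}X_{k,i}$ if $i\le k$ and $=p^{\ell-i}$ if $i\ge k$; and the multiplicative map $\mathrm{jnd}^\ell_k:R_k\to R_\ell$, $$\mathrm{jnd}^\ell_k\Big(\sum_{i=0}^k m_iX_{k,i}\Big)=m_kX_{\ell,\ell}+\sum_{k\le i<\ell}\frac{m_k^{p^{\ell-i}}-m_k^{p^{\ell-i-1}}}{p^{\ell-i}}X_{\ell,i}+\sum_{0\le i<k}\frac{(\sum_{s=i}^k m_sp^{k-s})^{p^{\ell-k}}-(\sum_{s=i+1}^k m_sp^{k-s})^{p^{\ell-k}}}{p^{\ell-i}}X_{\ell,i}$$ ($m_i\in\mathbb{Z}$). For $k=\ell$ these maps are the identity. These data form the Burnside Tambara functor on $\mathbb{Z}/p^r\mathbb{Z}$, and keeping only indices $\le n$ gives $\Omega_{H_n}$. An ideal of $\Omega_{H_n}$ is a sequence $[I_0,\dots,I_n]$ of ideals $I_k\subseteq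 R_k$ such that for every $1\le k\le n$: $\mathrm{ind}^k_{k-1}(I_{k-1})\subseteq I_k$, $\mathrm{res}^k_{k-1}(I_k)\subseteq I_{k-1}$, $\mathrm{jnd}^k_{k-1}(I_{k-1})\subseteq I_k$. Inclusion is componentwise; the restriction of $[I_0,\dots,I_n]$ to $H_i$ ($i\le n$) is $[I_0,\dots,I_i]$. *)

theory Defs
  imports "HOL-Computational_Algebra.Primes"
begin

text \<open>An element of R_k is represented by its coefficient vector
  m :: nat => int w.r.t. the basis X_{k,0},...,X_{k,k}; coefficients at indices > k are 0.\<close>

definition carR :: "nat \<Rightarrow> (nat \<Rightarrow> int) set" where
  "carR k = {m. \<forall>i>k. m i = 0}"

definition zeroR :: "nat \<Rightarrow> int" where
  "zeroR = (\<lambda>t. 0)"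

definition addR :: "(nat \<Rightarrow> int) \<Rightarrow> (nat \<Rightarrow> int) \<Rightarrow> nat \<Rightarrow> int" where
  "addR a b = (\<lambda>t. a t + b t)"

definition negR :: "(nat \<Rightarrow> int) \<Rightarrow> nat \<Rightarrow> int" where
  "negR a = (\<lambda>t. - a t)"

text \<open>Multiplication in R_k: X_{k,i} X_{k,j} = p^(k - max i j) X_{k, min i j}.\<close>
definition multR :: "nat \<Rightarrow> nat \<Rightarrow> (nat \<Rightarrow> int) \<Rightarrow> (nat \<Rightarrow> int) \<Rightarrow> nat \<Rightarrow> int" where
  "multR p k a b = (\<lambda>t. if t \<le> k then
      (\<Sum>i\<le>k. \<Sum>j\<le>k. if min i j = t then a i * b j * int p ^ (k - max i j) else 0)
    else 0)"

text \<open>ind^l_k : X_{k,i} \<mapsto> X_{l,i} (additive).\<close>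
definition indR :: "nat \<Rightarrow> (nat \<Rightarrow> int) \<Rightarrow> nat \<Rightarrow> int" where
  "indR k a = (\<lambda>t. if t \<le> k then a t else 0)"

text \<open>res^l_k(X_{l,i}) = p^(l-k) X_{k,i} if i \<le> k, and p^(l-i) (= p^(l-i) X_{k,k}) if i \<ge> k; extended additively.\<close>
definition resX :: "nat \<Rightarrow> nat \<Rightarrow> nat \<Rightarrow> nat \<Rightarrow> nat \<Rightarrow> int" where
  "resX p l k i = (\<lambda>t. if i \<le> k then (if t = i then int p ^ (l - k) else 0)
                       else (if t = k then int p ^ (l - i) else 0))"

definition resR :: "nat \<Rightarrow> nat \<Rightarrow> nat \<Rightarrow> (nat \<Rightarrow> int) \<Rightarrow> nat \<Rightarrow> int" where
  "resR p l k a = (\<lambda>t. \<Sum>i\<le>l. a i * resX p l k i t)"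

text \<open>jnd^l_k (multiplicative norm map); the divisions are exact.\<close>
definition jndR :: "nat \<Rightarrow> nat \<Rightarrow> nat \<Rightarrow> (nat \<Rightarrow> int) \<Rightarrow> nat \<Rightarrow> int" where
  "jndR p l k m = (\<lambda>t.
     if t = l then m k
     else if k \<le> t \<and> t < l then
       (m k ^ (p ^ (l - t)) - m k ^ (p ^ (l - t - 1))) div (int p ^ (l - t))
     else if t < k then
       ((\<Sum>s\<in>{t..k}. m s * int p ^ (k - s)) ^ (p ^ (l - k))
         - (\<Sum>s\<in>{t+1..k}. m s * int p ^ (k - s)) ^ (p ^ (l - k))) div (int p ^ (l - t))
     else 0)"

definition is_ideal_R :: "nat \<Rightarrow> nat \<Rightarrow> (nat \<Rightarrow> int) set \<Rightarrow> bool" where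
  "is_ideal_R p k I \<longleftrightarrow> I \<subseteq> carR k \<and> zeroR \<in> I \<and>
     (\<forall>a\<in>I. \<forall>b\<in>I. addR a b \<in> I) \<and> (\<forall>a\<in>I. negR a \<in> I) \<and>
     (\<forall>a\<in>I. \<forall>b\<in>carR k. multR p k b a \<in> I)"

definition ideal_gen_R :: "nat \<Rightarrow> nat \<Rightarrow> (nat \<Rightarrow> int) set \<Rightarrow> (nat \<Rightarrow> int) set" where
  "ideal_gen_R p k S = \<Inter>{J. is_ideal_R p k J \<and> S \<subseteq> J}"

text \<open>Ideals of Omega_{H_n}: sequences I_0,...,I_n (components beyond n are ignored).\<close>
definition is_ideal_Omega :: "nat \<Rightarrow> nat \<Rightarrow> (nat \<Rightarrow> (nat \<Rightarrow> int) set) \<Rightarrow> bool" where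
  "is_ideal_Omega p n I \<longleftrightarrow> (\<forall>k\<le>n. is_ideal_R p k (I k)) \<and>
     (\<forall>k. 1 \<le> k \<and> k \<le> n \<longrightarrow>
        indR (k - 1) ` I (k - 1) \<subseteq> I k \<and>
        resR p k (k - 1) ` I k \<subseteq> I (k - 1) \<and>
        jndR p k (k - 1) ` I (k - 1) \<subseteq> I k)"

definition L_ideal :: "nat \<Rightarrow> nat \<Rightarrow> (nat \<Rightarrow> int) set \<Rightarrow> (nat \<Rightarrow> int) set" where
  "L_ideal p k J = {a \<in> carR k. resR p k (k - 1) a \<in> J}"

definition S_ideal :: "nat \<Rightarrow> nat \<Rightarrow> (nat \<Rightarrow> int) set \<Rightarrow> (nat \<Rightarrow> int) set" where
  "S_ideal p k J = ideal_gen_R p k (indR (k - 1) ` J \<union> jndR p k (k - 1) ` J)"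

end

theory Submission
  imports Defs "HOL-Number_Theory.Number_Theory"
begin

lemma fermat_int:
  fixes m :: int assumes p: "prime p"
  shows "int p dvd m ^ p - m"
proof -
  define r where "r = nat (m mod int p)"
  have p0: "p > 0" using p prime_gt_0_nat by blast
  have mr: "[m = int r] (mod int p)" unfolding r_def using p0
    by (simp add: cong_def)
  have "[r ^ p = r] (mod p)"
  proof (cases "p dvd r")
    case True then show ?thesis
      by (metis cong_def dvd_imp_mod_0 p prime_gt_0_nat dvd_power dvd_trans dvd_refl mod_eq_0_iff_dvd)
  next
    case False
    from fermat_theorem[OF p False] have "[r ^ (p - 1) * r = 1 * r] (mod p)"
      by (rule cong_mult) simp
    moreover have "r ^ (p-1) * r = r ^ p" using p0
      by (metis Suc_diff_1 power_Suc2)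
    ultimately show ?thesis by simp
  qed
  then have "[int r ^ p = int r] (mod int p)"
    by (metis cong_int_iff of_nat_power)
  moreover have "[m ^ p = int r ^ p] (mod int p)" using mr by (rule cong_pow)
  ultimately have "[m ^ p = m] (mod int p)" using mr
    by (meson cong_sym cong_trans)
  then show ?thesis by (simp add: cong_iff_dvd_diff)
qed

lemma lift_dvd:
  fixes x y :: int assumes p: "prime p" and e: "e \<ge> 1"
  shows "int p ^ (e + 1) dvd (x + y * int p ^ e) ^ p - x ^ p"
proof -
  define a where "a = x + y * int p ^ e"
  have eq: "a ^ p - x ^ p = (a - x) * (\<Sum>i<p. x ^ (p - Suc i) * a ^ i)"
    by (rule power_diff_sumr2)
  have "[a = x] (mod int p)"
  proof -
    have "int p dvd y * int p ^ e" using e by (simp add: dvd_power)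
    then show ?thesis by (simp add: a_def cong_iff_dvd_diff)
  qed
  then have "[(\<Sum>i<p. x ^ (p - Suc i) * a ^ i) = (\<Sum>i<p. x ^ (p - Suc i) * x ^ i)] (mod int p)"
    by (intro cong_sum cong_mult cong_refl cong_pow)
  moreover have "(\<Sum>i<p. x ^ (p - Suc i) * x ^ i) = (\<Sum>i<p. x ^ (p - 1))"
    by (intro sum.cong refl) (simp add: power_add[symmetric])
  ultimately have "[(\<Sum>i<p. x ^ (p - Suc i) * a ^ i) = 0] (mod int p)"
    by (simp add: cong_def)
  then have d: "int p dvd (\<Sum>i<p. x ^ (p - Suc i) * a ^ i)"
    by (simp add: cong_0_iff)
  have "a - x = y * int p ^ e" by (simp add: a_def)
  then have "int p ^ e * int p dvd (a - x) * (\<Sum>i<p. x ^ (p - Suc i) * a ^ i)"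
    using d by (simp add: mult_dvd_mono)
  then show ?thesis using eq by (simp add: a_def mult.commute)
qed

definition mark :: "nat \<Rightarrow> nat \<Rightarrow> (nat \<Rightarrow> int) \<Rightarrow> nat \<Rightarrow> int" where
  "mark p h a j = (\<Sum>s=j..h. a s * int p ^ (h - s))"

lemma mark_step: "j \<le> h \<Longrightarrow> mark p h a j = a j * int p ^ (h - j) + mark p h a (Suc j)"
  unfolding mark_def by (simp add: sum.atLeast_Suc_atMost)

lemma mark_top: "mark p h a (Suc h) = 0"
  unfolding mark_def by simp

lemma mark_inj:
  assumes p: "p > 0" and a: "a \<in> carR h" and b: "b \<in> carR h"
    and m: "\<And>j. j \<le> h \<Longrightarrow> mark p h a j = mark p h b j"
  shows "a = b"
proof
  fix t
  show "a t = b t"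
  proof (cases "t \<le> h")
    case True
    have "mark p h a (Suc t) = mark p h b (Suc t)"
    proof (cases "Suc t \<le> h")
      case True then show ?thesis using m by simp
    next
      case False then have "t = h" using \<open>t \<le> h\<close> by simp
      then show ?thesis by (simp add: mark_top)
    qed
    moreover have "mark p h a t = mark p h b t" using m True by simp
    ultimately have "a t * int p ^ (h - t) = b t * int p ^ (h - t)"
      using mark_step[OF True] by (metis add_right_cancel)
    then show ?thesis using p by simp
  next
    case False then show ?thesis using a b by (simp add: carR_def)
  qed
qed

lemma mark_mult: "mark p h (multR p h a b) u = mark p h a u * mark p h b u"
proof -
  have "mark p h (multR p h a b) u =
     (\<Sum>t=u..h. \<Sum>i\<le>h. \<Sum>j\<le>h. if min i j = t then a i * b j * int p ^ (h - max i j) * int p ^ (h - min i j) else 0)"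
    unfolding mark_def multR_def
    by (intro sum.cong refl) (auto simp: sum_distrib_right intro!: sum.cong)
  also have "\<dots> = (\<Sum>i\<le>h. \<Sum>j\<le>h. \<Sum>t=u..h. if min i j = t then a i * b j * int p ^ (h - max i j) * int p ^ (h - min i j) else 0)"
    by (simp add: sum.swap[of _ "{u..h}"] sum.swap[of _ "{..h}" "{u..h}"])
  also have "\<dots> = (\<Sum>i\<le>h. \<Sum>j\<le>h. if u \<le> min i j then a i * b j * int p ^ (h - max i j) * int p ^ (h - min i j) else 0)"
    by (intro sum.cong refl) (auto simp: sum.delta' min_le_iff_disj)
  also have "\<dots> = (\<Sum>i\<le>h. \<Sum>j\<le>h. (if u \<le> i then a i * int p ^ (h - i) else 0) * (if u \<le> j then b j * int p ^ (h - j) else 0))"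
    by (intro sum.cong refl) (auto simp: max_def min_def mult_ac)
  also have "\<dots> = (\<Sum>i\<le>h. if u \<le> i then a i * int p ^ (h - i) else 0) * (\<Sum>j\<le>h. if u \<le> j then b j * int p ^ (h - j) else 0)"
    by (simp add: sum_product)
  also have "(\<Sum>i\<le>h. if u \<le> i then a i * int p ^ (h - i) else 0) = mark p h a u"
    unfolding mark_def by (simp add: sum.If_cases) (intro sum.cong; auto)
  also have "(\<Sum>i\<le>h. if u \<le> i then b i * int p ^ (h - i) else 0) = mark p h b u"
    unfolding mark_def by (simp add: sum.If_cases) (intro sum.cong; auto)
  finally show ?thesis .
qed

lemma res_formula: "resR p (Suc h) h a t =
   (if t < h then int p * a t else if t = h then int p * a h + a (Suc h) else 0)"
proof -
  have "resR p (Suc h) h a t = (\<Sum>i\<le>h. a i * resX p (Suc h) h i t) + a (Suc h) * resX p (Suc h) h (Suc h) t"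
    unfolding resR_def by (simp add: atMost_Suc)
  also have "(\<Sum>i\<le>h. a i * resX p (Suc h) h i t) = (\<Sum>i\<le>h. if i = t then a t * int p else 0)"
    by (intro sum.cong refl) (auto simp: resX_def)
  also have "\<dots> = (if t \<le> h then a t * int p else 0)" by (simp add: sum.delta)
  finally show ?thesis by (auto simp: resX_def)
qed

lemma res_car: "resR p (Suc h) h a \<in> carR h"
  by (simp add: carR_def res_formula)

lemma res_add: "resR p (Suc h) h (addR a b) = addR (resR p (Suc h) h a) (resR p (Suc h) h b)"
  by (rule ext) (simp add: res_formula addR_def algebra_simps)
lemma res_neg: "resR p (Suc h) h (negR a) = negR (resR p (Suc h) h a)"
  by (rule ext) (simp add: res_formula negR_def algebra_simps)
lemma res_zero: "resR p (Suc h) h zeroR = zeroR"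
  by (rule ext) (simp add: res_formula zeroR_def)

lemma mark_res: "j \<le> h \<Longrightarrow> mark p h (resR p (Suc h) h a) j = mark p (Suc h) a j"
proof (induction j rule: inc_induct)
  case base
  then show ?case by (simp add: mark_def res_formula)
next
  case (step n)
  then show ?case
    by (simp add: mark_step res_formula Suc_diff_le)
qed

lemma mult_car: "multR p h a b \<in> carR h"
  by (simp add: carR_def multR_def)

definition constR :: "nat \<Rightarrow> int \<Rightarrow> nat \<Rightarrow> int" where
  "constR h c = (\<lambda>t. if t = h then c else 0)"

lemma const_car: "constR h c \<in> carR h" by (simp add: carR_def constR_def)
lemma mark_const: "j \<le> h \<Longrightarrow> mark p h (constR h c) j = c"
proof (induction j rule: inc_induct)
  case base then show ?case by (simp add: mark_def constR_def)
next
  case (step n) then show ?case by (simp add: mark_step[of n] constR_def)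
qed

fun powR :: "nat \<Rightarrow> nat \<Rightarrow> (nat \<Rightarrow> int) \<Rightarrow> nat \<Rightarrow> nat \<Rightarrow> int" where
  "powR p h a 0 = constR h 1"
| "powR p h a (Suc n) = multR p h (powR p h a n) a"

lemma pow_car: "powR p h a n \<in> carR h"
  by (cases n) (simp_all add: const_car mult_car)
lemma mark_pow: "j \<le> h \<Longrightarrow> mark p h (powR p h a n) j = mark p h a j ^ n"
  by (induction n) (simp_all add: mark_const mark_mult)

lemma mark_ind: "j \<le> h \<Longrightarrow> mark p (Suc h) (indR h a) j = int p * mark p h a j"
proof (induction j rule: inc_induct)
  case base
  then show ?case by (simp add: mark_def indR_def)
next
  case (step n)
  then show ?case
    by (simp add: mark_step indR_def Suc_diff_le algebra_simps)
qed

lemma res_ind: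
  assumes "p > 0" shows "resR p (Suc h) h (indR h a) = multR p h (constR h (int p)) a"
  by (rule mark_inj[OF assms res_car mult_car])
    (simp add: mark_res mark_mult mark_ind mark_const)

lemma jnd_top: "jndR p (Suc h) h m (Suc h) = m h" by (simp add: jndR_def)
lemma jnd_h: "jndR p (Suc h) h m h = (m h ^ p - m h) div int p" by (simp add: jndR_def)
lemma jnd_lt: "t < h \<Longrightarrow> jndR p (Suc h) h m t =
   (mark p h m t ^ p - mark p h m (Suc t) ^ p) div int p ^ (Suc h - t)"
  by (simp add: jndR_def mark_def)
lemma jnd_car: "jndR p (Suc h) h m \<in> carR (Suc h)"
  by (simp add: jndR_def carR_def)

lemma mark_jnd:
  assumes p: "prime p"
  shows "j \<le> h \<Longrightarrow> mark p (Suc h) (jndR p (Suc h) h m) j = mark p h m j ^ p"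
proof (induction j rule: inc_induct)
  case base
  have d: "int p dvd m h ^ p - m h" by (rule fermat_int[OF p])
  have "mark p (Suc h) (jndR p (Suc h) h m) h = jndR p (Suc h) h m h * int p + m h"
    by (simp add: mark_step mark_top jnd_top)
  also have "\<dots> = m h ^ p" using d by (simp add: jnd_h)
  finally show ?case by (simp add: mark_def)
next
  case (step n)
  have e: "h - n \<ge> 1" using step by simp
  have M: "mark p h m n = mark p h m (Suc n) + m n * int p ^ (h - n)"
    using step by (simp add: mark_step)
  have d: "int p ^ (Suc h - n) dvd mark p h m n ^ p - mark p h m (Suc n) ^ p"
    using lift_dvd[OF p e, of "mark p h m (Suc n)" "m n"] M step by (simp add: Suc_diff_le)
  have "mark p (Suc h) (jndR p (Suc h) h m) n
      = jndR p (Suc h) h m n * int p ^ (Suc h - n) + mark p h m (Suc n) ^ p"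
    using step by (simp add: mark_step)
  also have "\<dots> = mark p h m n ^ p" using d step by (simp add: jnd_lt)
  finally show ?case .
qed

lemma res_jnd:
  assumes p: "prime p"
  shows "resR p (Suc h) h (jndR p (Suc h) h m) = multR p h (powR p h m (p - 1)) m"
proof -
  have p0: "p > 0" using p prime_gt_0_nat by blast
  show ?thesis
    by (rule mark_inj[OF p0 res_car mult_car])
      (simp add: mark_res mark_mult mark_pow mark_jnd[OF p] power_Suc2[symmetric] p0)
qed

lemma res_mult: assumes p0: "p > 0"
  shows "resR p (Suc h) h (multR p (Suc h) b a) = multR p h (resR p (Suc h) h b) (resR p (Suc h) h a)"
proof (rule mark_inj[OF p0 res_car mult_car])
  fix j assume j: "j \<le> h"
  have "mark p h (resR p (Suc h) h (multR p (Suc h) b a)) j = mark p (Suc h) b j * mark p (Suc h) a j"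
    using j by (simp only: mark_res mark_mult)
  also have "\<dots> = mark p h (resR p (Suc h) h b) j * mark p h (resR p (Suc h) h a) j"
    using j by (simp only: mark_res)
  finally show "mark p h (resR p (Suc h) h (multR p (Suc h) b a)) j =
     mark p h (multR p h (resR p (Suc h) h b) (resR p (Suc h) h a)) j"
    by (simp only: mark_mult)
qed

lemma L_ideal_ok:
  assumes p0: "p > 0" and I: "is_ideal_R p h Ih"
  shows "is_ideal_R p (Suc h) (L_ideal p (Suc h) Ih)"
  unfolding is_ideal_R_def
proof (intro conjI ballI)
  have I0: "zeroR \<in> Ih" and Iadd: "\<And>a b. a \<in> Ih \<Longrightarrow> b \<in> Ih \<Longrightarrow> addR a b \<in> Ih"
    and Ineg: "\<And>a. a \<in> Ih \<Longrightarrow> negR a \<in> Ih"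
    and Imul: "\<And>a b. a \<in> Ih \<Longrightarrow> b \<in> carR h \<Longrightarrow> multR p h b a \<in> Ih"
    using I unfolding is_ideal_R_def by auto
  have Lmem: "x \<in> L_ideal p (Suc h) Ih \<longleftrightarrow> x \<in> carR (Suc h) \<and> resR p (Suc h) h x \<in> Ih" for x
    unfolding L_ideal_def by simp
  show "L_ideal p (Suc h) Ih \<subseteq> carR (Suc h)" using Lmem by blast
  have "zeroR \<in> carR (Suc h)" by (simp add: zeroR_def carR_def)
  then show "zeroR \<in> L_ideal p (Suc h) Ih" using I0 Lmem res_zero by metis
  fix a assume a: "a \<in> L_ideal p (Suc h) Ih"
  have "negR a \<in> carR (Suc h)" using a Lmem by (simp add: negR_def carR_def)
  then show "negR a \<in> L_ideal p (Suc h) Ih" using Ineg a Lmem res_neg by metis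
  {
    fix b assume b: "b \<in> L_ideal p (Suc h) Ih"
    have "addR a b \<in> carR (Suc h)" using a b Lmem by (simp add: addR_def carR_def)
    then show "addR a b \<in> L_ideal p (Suc h) Ih" using Iadd a b Lmem res_add by metis
  }
  fix b assume b: "b \<in> carR (Suc h)"
  have "multR p h (resR p (Suc h) h b) (resR p (Suc h) h a) \<in> Ih"
    using Imul a Lmem res_car by blast
  then show "multR p (Suc h) b a \<in> L_ideal p (Suc h) Ih"
    using Lmem res_mult[OF p0] mult_car by metis
qed

lemma gen_ideal:
  assumes J0: "is_ideal_R p k J0" "G \<subseteq> J0"
  shows "is_ideal_R p k (ideal_gen_R p k G)" "G \<subseteq> ideal_gen_R p k G"
    "\<And>J. is_ideal_R p k J \<Longrightarrow> G \<subseteq> J \<Longrightarrow> ideal_gen_R p k G \<subseteq> J"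
proof -
  let ?F = "{J. is_ideal_R p k J \<and> G \<subseteq> J}"
  have mem: "x \<in> ideal_gen_R p k G \<longleftrightarrow> (\<forall>J\<in>?F. x \<in> J)" for x
    unfolding ideal_gen_R_def by blast
  show "G \<subseteq> ideal_gen_R p k G" using mem by blast
  show "\<And>J. is_ideal_R p k J \<Longrightarrow> G \<subseteq> J \<Longrightarrow> ideal_gen_R p k G \<subseteq> J"
    using mem by blast
  have J0F: "J0 \<in> ?F" using J0 by blast
  show "is_ideal_R p k (ideal_gen_R p k G)"
    unfolding is_ideal_R_def
  proof (intro conjI ballI subsetI)
    fix x assume "x \<in> ideal_gen_R p k G"
    then have "x \<in> J0" using mem J0F by blast
    then show "x \<in> carR k" using J0(1) unfolding is_ideal_R_def by blast
  next
    show "zeroR \<in> ideal_gen_R p k G" unfolding mem is_ideal_R_def by simp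
  next
    fix a b assume "a \<in> ideal_gen_R p k G" "b \<in> ideal_gen_R p k G"
    then show "addR a b \<in> ideal_gen_R p k G" unfolding mem is_ideal_R_def by simp
  next
    fix a assume "a \<in> ideal_gen_R p k G"
    then show "negR a \<in> ideal_gen_R p k G" unfolding mem is_ideal_R_def by simp
  next
    fix a b assume "a \<in> ideal_gen_R p k G" "b \<in> carR k"
    then show "multR p k b a \<in> ideal_gen_R p k G" unfolding mem is_ideal_R_def by simp
  qed
qed

lemma extend:
  assumes "is_ideal_Omega p h I" "is_ideal_R p (Suc h) X" "indR h ` I h \<subseteq> X"
    "resR p (Suc h) h ` X \<subseteq> I h" "jndR p (Suc h) h ` I h \<subseteq> X"
  shows "is_ideal_Omega p (Suc h) (I(Suc h := X))"
  unfolding is_ideal_Omega_def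
proof (intro conjI allI impI)
  fix k assume "k \<le> Suc h"
  then show "is_ideal_R p k ((I(Suc h := X)) k)"
    using assms(1,2) unfolding is_ideal_Omega_def by (cases "k = Suc h") auto
next
  fix k assume k: "1 \<le> k \<and> k \<le> Suc h"
  have c: "k \<noteq> Suc h \<Longrightarrow> indR (k - 1) ` I (k - 1) \<subseteq> I k \<and>
        resR p k (k - 1) ` I k \<subseteq> I (k - 1) \<and> jndR p k (k - 1) ` I (k - 1) \<subseteq> I k"
    using assms(1) k unfolding is_ideal_Omega_def by auto
  have ne: "k - 1 \<noteq> Suc h" using k by auto
  show "indR (k - 1) ` (I(Suc h := X)) (k - 1) \<subseteq> (I(Suc h := X)) k"
    using c ne assms(3) by (cases "k = Suc h") auto
  show "resR p k (k - 1) ` (I(Suc h := X)) k \<subseteq> (I(Suc h := X)) (k - 1)"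
    using c ne assms(4) by (cases "k = Suc h") auto
  show "jndR p k (k - 1) ` (I(Suc h := X)) (k - 1) \<subseteq> (I(Suc h := X)) k"
    using c ne assms(5) by (cases "k = Suc h") auto
qed

theorem proposition3:
  fixes p r k :: nat and I :: "nat \<Rightarrow> (nat \<Rightarrow> int) set"
  assumes "prime p" and "1 \<le> k" and "k \<le> r"
    and "is_ideal_Omega p (k - 1) I"
  shows "(is_ideal_Omega p k (I(k := L_ideal p k (I (k - 1)))) \<and>
          (\<forall>J. is_ideal_Omega p k J \<and> (\<forall>i<k. J i = I i) \<longrightarrow>
               J k \<subseteq> L_ideal p k (I (k - 1))))
       \<and> (is_ideal_Omega p k (I(k := S_ideal p k (I (k - 1)))) \<and>
          (\<forall>J. is_ideal_Omega p k J \<and> (\<forall>i<k. J i = I i) \<longrightarrow>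
               S_ideal p k (I (k - 1)) \<subseteq> J k))"
proof -
  obtain h where kh: "k = Suc h" using assms(2) by (cases k) auto
  have p: "prime p" by fact
  have p0: "p > 0" using p prime_gt_0_nat by blast
  have IO: "is_ideal_Omega p h I" using assms(4) kh by simp
  have Ih: "is_ideal_R p h (I h)" using IO unfolding is_ideal_Omega_def by simp
  define L where "L = L_ideal p (Suc h) (I h)"
  have Lmem: "x \<in> L \<longleftrightarrow> x \<in> carR (Suc h) \<and> resR p (Suc h) h x \<in> I h" for x
    unfolding L_def L_ideal_def by simp
  have Imul: "\<And>a b. a \<in> I h \<Longrightarrow> b \<in> carR h \<Longrightarrow> multR p h b a \<in> I h"
    using Ih unfolding is_ideal_R_def by blast
  have LI: "is_ideal_R p (Suc h) L" unfolding L_def by (rule L_ideal_ok[OF p0 Ih])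
  have indL: "indR h ` I h \<subseteq> L"
  proof
    fix x assume "x \<in> indR h ` I h"
    then obtain a where a: "a \<in> I h" "x = indR h a" by blast
    have "multR p h (constR h (int p)) a \<in> I h"
      using Imul a(1) const_car by blast
    moreover have "indR h a \<in> carR (Suc h)" by (simp add: carR_def indR_def)
    ultimately show "x \<in> L" using a Lmem res_ind[OF p0] by metis
  qed
  have jndL: "jndR p (Suc h) h ` I h \<subseteq> L"
  proof
    fix x assume "x \<in> jndR p (Suc h) h ` I h"
    then obtain a where a: "a \<in> I h" "x = jndR p (Suc h) h a" by blast
    have "multR p h (powR p h a (p - 1)) a \<in> I h"
      using Imul a(1) pow_car by blast
    then show "x \<in> L" using a jnd_car Lmem res_jnd[OF p] by metis
  qed
  have resL: "resR p (Suc h) h ` L \<subseteq> I h" using Lmem by blast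
  define G where "G = indR h ` I h \<union> jndR p (Suc h) h ` I h"
  have GL: "G \<subseteq> L" using indL jndL G_def by blast
  define S where "S = S_ideal p (Suc h) (I h)"
  have S_eq: "S = ideal_gen_R p (Suc h) G" by (simp add: S_def S_ideal_def G_def)
  note g = gen_ideal[OF LI GL]
  have SL: "S \<subseteq> L" using g(3)[OF LI GL] S_eq by simp
  have part1: "is_ideal_Omega p (Suc h) (I(Suc h := L))"
    by (rule extend[OF IO LI indL resL jndL])
  have part2: "is_ideal_Omega p (Suc h) (I(Suc h := S))"
  proof (rule extend[OF IO])
    show "is_ideal_R p (Suc h) S" using g(1) S_eq by simp
    show "indR h ` I h \<subseteq> S" using g(2) S_eq G_def by blast
    show "jndR p (Suc h) h ` I h \<subseteq> S" using g(2) S_eq G_def by blast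
    show "resR p (Suc h) h ` S \<subseteq> I h" using SL resL by blast
  qed
  have max: "J (Suc h) \<subseteq> L" if J: "is_ideal_Omega p (Suc h) J" "\<forall>i<Suc h. J i = I i" for J
  proof -
    have A: "\<forall>k\<le>Suc h. is_ideal_R p k (J k)" and
      B: "\<forall>k. 1 \<le> k \<and> k \<le> Suc h \<longrightarrow> resR p k (k - 1) ` J k \<subseteq> J (k - 1)"
      using J(1) unfolding is_ideal_Omega_def by blast+
    have "J (Suc h) \<subseteq> carR (Suc h)" using A unfolding is_ideal_R_def by blast
    moreover have "resR p (Suc h) h ` J (Suc h) \<subseteq> I h" using B[rule_format, of "Suc h"] J(2) by simp
    ultimately show ?thesis using Lmem by blast
  qed
  have min: "S \<subseteq> J (Suc h)" if J: "is_ideal_Omega p (Suc h) J" "\<forall>i<Suc h. J i = I i" for J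
  proof -
    have A: "\<forall>k\<le>Suc h. is_ideal_R p k (J k)" and
      B: "\<forall>k. 1 \<le> k \<and> k \<le> Suc h \<longrightarrow> indR (k - 1) ` J (k - 1) \<subseteq> J k \<and>
        jndR p k (k - 1) ` J (k - 1) \<subseteq> J k"
      using J(1) unfolding is_ideal_Omega_def by blast+
    have "is_ideal_R p (Suc h) (J (Suc h))" using A by blast
    moreover have "indR h ` J h \<subseteq> J (Suc h)" "jndR p (Suc h) h ` J h \<subseteq> J (Suc h)"
      using B[rule_format, of "Suc h"] by simp_all
    moreover have "J h = I h" using J(2) by simp
    ultimately have "G \<subseteq> J (Suc h)" "is_ideal_R p (Suc h) (J (Suc h))" using G_def by auto
    then show ?thesis using g(3) S_eq by blast
  qed
  show ?thesis using part1 part2 max min unfolding kh L_def S_def by simp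
qed
end
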